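(* Let $x=(x_k)_{k\in\mathbb{Z}}$ be a sequence with $x_k\in\{-1,0,1,2,\dots\}$ for all $k$, let $T$ be its record graph, and let $i\in\mathbb{Z}$. If $t_x(i)=-1$, then the number of children of $i$ in $T$ is $d_1(i,T)=x_{i-1}+1$. If $t_x(i)\ge0$, then $d_1(i,T)=x_{i-1}+1-t_x(i)$.
   Context: Write $y(j,k)=\sum_{l=j}^{k-1}x_l$ for $j<k$. The record map is $R_x(i)=\inf\{n>i: y(i,n)\ge0\}$ if this set is nonempty, and $R_x(i)=i$ otherwise; the record graph has vertex set $\mathbb{Z}$ and directed edges $i\to R_x(i)$ for $R_x(i)\ne i$; the children of $i$ are the $j\ne i$ with $R_x(j)=i$. The type of $i$ is $t_x(i)=\inf\{\max(y(m,i),-1): m<i\}\in\{-1,0,1,\dots\}$. *)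

theory Defs
  imports Main
begin

definition ysum :: "(int \<Rightarrow> int) \<Rightarrow> int \<Rightarrow> int \<Rightarrow> int" where
  "ysum x j k = (\<Sum>l\<in>{j..<k}. x l)"

definition record_map :: "(int \<Rightarrow> int) \<Rightarrow> int \<Rightarrow> int" where
  "record_map x i = (if (\<exists>n>i. ysum x i n \<ge> 0)
                     then Inf {n. n > i \<and> ysum x i n \<ge> 0} else i)"

definition children :: "(int \<Rightarrow> int) \<Rightarrow> int \<Rightarrow> int set" where
  "children x i = {j. j \<noteq> i \<and> record_map x j = i}"

definition rtype :: "(int \<Rightarrow> int) \<Rightarrow> int \<Rightarrow> int" where
  "rtype x i = Inf {max (ysum x m i) (-1) | m. m < i}"

end

theory Submission
  imports Defs
begin

lemma int_Inf_mem:
  fixes X :: "int set"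
  assumes "X \<noteq> {}" "bdd_below X"
  shows "Inf X \<in> X"
proof -
  have "Inf X < Inf X + 1" by simp
  then obtain y where y: "y \<in> X" "y < Inf X + 1" using cInf_less_iff[OF assms] by blast
  have "Inf X \<le> y" using cInf_lower[OF y(1) assms(2)] .
  with y have "y = Inf X" by simp
  with y show ?thesis by simp
qed

lemma int_Sup_mem:
  fixes X :: "int set"
  assumes "X \<noteq> {}" "bdd_above X"
  shows "Sup X \<in> X"
proof -
  have "Sup X - 1 < Sup X" by simp
  then obtain y where y: "y \<in> X" "Sup X - 1 < y" using less_cSup_iff[OF assms] by blast
  have "y \<le> Sup X" using cSup_upper[OF y(1) assms(2)] .
  with y have "y = Sup X" by simp
  with y show ?thesis by simp
qed

lemma ysum_split:
  assumes "j \<le> n" "n \<le> k"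
  shows "ysum x j k = ysum x j n + ysum x n k"
proof -
  have "{j..<k} = {j..<n} \<union> {n..<k}" using assms by auto
  moreover have "{j..<n} \<inter> {n..<k} = {}" by auto
  ultimately show ?thesis unfolding ysum_def by (simp add: sum.union_disjoint)
qed

lemma ysum_step:
  assumes "m < i"
  shows "ysum x m i = x m + ysum x (m+1) i"
proof -
  have "ysum x m i = ysum x m (m+1) + ysum x (m+1) i" using assms by (intro ysum_split) auto
  moreover have "{m..<m+1} = {m}" by auto
  then have "ysum x m (m+1) = x m" unfolding ysum_def by simp
  ultimately show ?thesis by simp
qed

lemma children_iff:
  "j \<in> children x i \<longleftrightarrow> j < i \<and> ysum x j i \<ge> 0 \<and> (\<forall>n. j < n \<and> n < i \<longrightarrow> ysum x j n < 0)"
proof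
  assume "j \<in> children x i"
  then have ji: "j \<noteq> i" and r: "record_map x j = i" unfolding children_def by auto
  have ex: "\<exists>n>j. ysum x j n \<ge> 0"
    using ji r unfolding record_map_def by (auto split: if_splits)
  let ?S = "{n. n > j \<and> ysum x j n \<ge> 0}"
  have ne: "?S \<noteq> {}" using ex by auto
  have bd: "bdd_below ?S" by (rule bdd_belowI[of _ j]) auto
  have ieq: "Inf ?S = i" using r ex unfolding record_map_def by simp
  have "i \<in> ?S" using int_Inf_mem[OF ne bd] ieq by simp
  moreover have "\<forall>n. j < n \<and> n < i \<longrightarrow> ysum x j n < 0"
  proof (intro allI impI)
    fix n assume "j < n \<and> n < i"
    then show "ysum x j n < 0" using cInf_lower[OF _ bd, of n] ieq by force
  qed
  ultimately show "j < i \<and> ysum x j i \<ge> 0 \<and> (\<forall>n. j < n \<and> n < i \<longrightarrow> ysum x j n < 0)" by auto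
next
  assume a: "j < i \<and> ysum x j i \<ge> 0 \<and> (\<forall>n. j < n \<and> n < i \<longrightarrow> ysum x j n < 0)"
  let ?S = "{n. n > j \<and> ysum x j n \<ge> 0}"
  have ex: "\<exists>n>j. ysum x j n \<ge> 0" using a by auto
  have "Inf ?S = i"
  proof (rule cInf_eq_minimum)
    show "i \<in> ?S" using a by auto
    fix n assume n: "n \<in> ?S" show "i \<le> n"
    proof (rule ccontr)
      assume "\<not> i \<le> n" then have "n < i" by simp
      with n a show False by auto
    qed
  qed
  then have "record_map x j = i" using ex unfolding record_map_def by simp
  then show "j \<in> children x i" using a unfolding children_def by auto
qed

lemma children_iff2:
  "j \<in> children x i \<longleftrightarrow> j < i \<and> ysum x j i \<ge> 0 \<and> (\<forall>n. j < n \<and> n < i \<longrightarrow> ysum x n i > ysum x j i)"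
proof -
  have "\<And>n. j < n \<Longrightarrow> n < i \<Longrightarrow> ysum x j i = ysum x j n + ysum x n i"
    by (rule ysum_split) auto
  then show ?thesis unfolding children_iff by force
qed

lemma main_count:
  fixes x :: "int \<Rightarrow> int" and i a :: int
  assumes step: "\<And>k. x k \<ge> -1"
    and a0: "a \<ge> 0"
    and reach: "\<exists>m<i. ysum x m i \<le> a"
    and lowb: "\<And>m. m < i \<Longrightarrow> ysum x m i \<ge> a \<or> ysum x m i < 0"
  shows "bij_betw (\<lambda>j. ysum x j i) (children x i) {a..x (i - 1)}"
proof -
  let ?S = "\<lambda>m. ysum x m i"
  have last: "?S (i - 1) = x (i - 1)" using ysum_step[of "i - 1" i x] unfolding ysum_def by simp
  show ?thesis unfolding bij_betw_def
  proof (intro conjI)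
    show "inj_on ?S (children x i)"
    proof (rule inj_onI)
      fix j j' assume j: "j \<in> children x i" and j': "j' \<in> children x i" and e: "?S j = ?S j'"
      show "j = j'"
      proof (rule ccontr)
        assume "j \<noteq> j'"
        then have "j < j' \<or> j' < j" by auto
        then show False using j j' e unfolding children_iff2 by force
      qed
    qed
    show "?S ` children x i = {a..x (i - 1)}"
    proof
      show "?S ` children x i \<subseteq> {a..x (i - 1)}"
      proof
        fix v assume "v \<in> ?S ` children x i"
        then obtain j where j: "j \<in> children x i" "v = ?S j" by auto
        then have c: "j < i" "?S j \<ge> 0" "\<forall>n. j < n \<and> n < i \<longrightarrow> ?S n > ?S j"
          unfolding children_iff2 by auto
        have "?S j \<le> x (i - 1)"
        proof (cases "j = i - 1")
          case True then show ?thesis using last by simp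
        next
          case False then show ?thesis using c(3)[rule_format, of "i - 1"] c(1) last by auto
        qed
        moreover have "?S j \<ge> a" using lowb[OF c(1)] c(2) by auto
        ultimately show "v \<in> {a..x (i - 1)}" using j by auto
      qed
    next
      show "{a..x (i - 1)} \<subseteq> ?S ` children x i"
      proof
        fix v assume v: "v \<in> {a..x (i - 1)}"
        let ?M = "{m. m < i \<and> ?S m \<le> v}"
        have ne: "?M \<noteq> {}" using reach v by force
        have bd: "bdd_above ?M" by (rule bdd_aboveI[of _ i]) auto
        define m0 where "m0 = Sup ?M"
        have m0M: "m0 \<in> ?M" unfolding m0_def by (rule int_Sup_mem[OF ne bd])
        have above: "\<And>n. m0 < n \<Longrightarrow> n < i \<Longrightarrow> ?S n > v"
        proof -
          fix n assume "m0 < n" "n < i"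
          moreover have "n \<in> ?M \<Longrightarrow> n \<le> m0" unfolding m0_def using cSup_upper[OF _ bd] by blast
          ultimately show "?S n > v" by force
        qed
        have eq: "?S m0 = v"
        proof (cases "m0 = i - 1")
          case True then show ?thesis using m0M last v by auto
        next
          case False
          then have "m0 + 1 < i" using m0M by auto
          then have "?S (m0+1) > v" using above by simp
          moreover have "?S m0 = x m0 + ?S (m0+1)" using ysum_step m0M by auto
          ultimately show ?thesis using step[of m0] m0M by simp
        qed
        have "m0 \<in> children x i" unfolding children_iff2 using m0M eq above v a0 by auto
        then show "v \<in> ?S ` children x i" using eq by force
      qed
    qed
  qed
qed

theorem lemma4p5:
  fixes x :: "int \<Rightarrow> int" and i :: int
  assumes "\<And>k. x k \<ge> -1"
  shows "(rtype x i = -1 \<longrightarrow>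
            finite (children x i) \<and> int (card (children x i)) = x (i - 1) + 1)
       \<and> (rtype x i \<ge> 0 \<longrightarrow>
            finite (children x i) \<and> int (card (children x i)) = x (i - 1) + 1 - rtype x i)"
proof -
  let ?T = "{max (ysum x m i) (-1) | m. m < i}"
  have ne: "?T \<noteq> {}" by (auto intro: exI[of _ "i - 1"])
  have bd: "bdd_below ?T" by (rule bdd_belowI[of _ "-1"]) auto
  have tmem: "rtype x i \<in> ?T" unfolding rtype_def by (rule int_Inf_mem[OF ne bd])
  have tlow: "\<And>m. m < i \<Longrightarrow> rtype x i \<le> max (ysum x m i) (-1)"
    unfolding rtype_def by (rule cInf_lower[OF _ bd]) auto
  have "{i - 1..<i} = {i - 1}" by auto
  then have last: "ysum x (i - 1) i = x (i - 1)" unfolding ysum_def by simp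
  have fin_card: "finite (children x i) \<and> int (card (children x i)) = x (i - 1) + 1 - a"
    if a0: "a \<ge> 0" and reach: "\<exists>m<i. ysum x m i \<le> a"
      and lowb: "\<And>m. m < i \<Longrightarrow> ysum x m i \<ge> a \<or> ysum x m i < 0"
      and le: "a \<le> x (i - 1) + 1" for a
  proof -
    have b: "bij_betw (\<lambda>j. ysum x j i) (children x i) {a..x (i - 1)}"
      using main_count[OF assms a0 reach lowb] by blast
    have "finite (children x i)" using bij_betw_finite[OF b] by simp
    moreover have "card (children x i) = card {a..x (i - 1)}" using bij_betw_same_card[OF b] .
    ultimately show ?thesis using le by simp
  qed
  show ?thesis
  proof (intro conjI impI)
    assume t: "rtype x i = -1"
    then obtain m where m: "m < i" "max (ysum x m i) (-1) = -1" using tmem by auto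
    have "finite (children x i) \<and> int (card (children x i)) = x (i - 1) + 1 - 0"
      by (rule fin_card) (use m assms[of "i - 1"] in auto)
    then show "finite (children x i)" "int (card (children x i)) = x (i - 1) + 1" by auto
  next
    assume t: "rtype x i \<ge> 0"
    obtain m where m: "m < i" "max (ysum x m i) (-1) = rtype x i" using tmem by auto
    have le: "rtype x i \<le> x (i - 1)" using tlow[of "i - 1"] last t by simp
    have "finite (children x i) \<and> int (card (children x i)) = x (i - 1) + 1 - rtype x i"
    proof (rule fin_card)
      show "\<exists>m<i. ysum x m i \<le> rtype x i" using m t by (intro exI[of _ m]) auto
      fix m' assume "m' < i" then show "ysum x m' i \<ge> rtype x i \<or> ysum x m' i < 0"
        using tlow[of m'] t by auto
    qed (use t le in auto)
    then show "finite (children x i)" "int (card (children x i)) = x (i - 1) + 1 - rtype x i" by auto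
  qed
qed

end
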